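(* Let $H$ be an $r$-graph. Then $\mathrm{sd}\,\mathsf{B}_{\mathrm{edge}}(H)$ $S_r$-collapses onto its $S_r$-subcomplex $\Delta(i(P_{K_r^r,H}))$.
   Context: An $r$-graph $H$ consists of a vertex set $V(H)$ and a set $E(H)$ of $r$-element subsets of $V(H)$; an edge $\{v_1,\dots,v_r\}$ is written $v_1\cdots v_r$. $P_{K_r^r,H}$ is the poset of maps $f:\{1,\dots,r\}\to 2^{V(H)}\setminus\{\varnothing\}$ such that for every choice $x_j\in f(j)$ the $x_j$ are distinct and $x_1\cdots x_r\in E(H)$, ordered by $f\le g$ iff $f(j)\subseteq g(j)$ for all $j$; $S_r$ acts on it on the right by $f\sigma=f\circ\sigma$. $\mathsf{B}_{\mathrm{edge}}(H)$ is the simplicial complex whose vertices are tuples $(v_1,\dots,v_r)\in V(H)^r$ with $v_1\cdots v_r\in E(H)$ and whose simplices are the sets $F$ of such tuples with $\mathrm{pr}_1(F),\dots,\mathrm{pr}_r(F)$ pairwise disjoint and $x_1\cdots x_r\in E(H)$ for every choice $x_j\in\mathrm{pr}_j(F)$; $S_r$ acts on the right by $(v_1,\dots,v_r)\sigma=(v_{\sigma(1)},\dots,v_{\sigma(r)})$. $\mathcal F(\mathsf{B}_{\mathrm{edge}}(H))$ is its poset of nonempty simplices, $\Delta(P)$ denotes the order complex of a poset $P$ (simplices = chains), and $\mathrm{sd}\,\mathsf{B}_{\mathrm{edge}}(H)=\Delta(\mathcal F(\mathsf{B}_{\mathrm{edge}}(H)))$ with the induced $S_r$-action. The $S_r$-equivariant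 injective poset map $i:P_{K_r^r,H}\to\mathcal F(\mathsf{B}_{\mathrm{edge}}(H))$ is $i(\varphi)=\varphi(1)\times\cdots\times\varphi(r)$, so $\Delta(i(P_{K_r^r,H}))$ is an $S_r$-subcomplex of $\mathrm{sd}\,\mathsf{B}_{\mathrm{edge}}(H)$. For a simplicial $G$-complex $\mathsf K$: a facet is a maximal simplex; a simplex $\sigma$ is free if it is a proper face of exactly one facet $\varphi_\sigma$; a collection of free simplices is independently free if no two distinct members have a common coface. For free $\sigma$ with $\dim\varphi_\sigma=\dim\sigma+1$ and $\sigma G$ independently free, an elementary $G$-collapse replaces $\mathsf K$ by the subcomplex of simplices having no $\sigma g$ ($g\in G$) as a face. $\mathsf K$ $G$-collapses onto a $G$-subcomplex $\mathsf K'$ if a finite sequence of elementary $G$-collapses leads from $\mathsf K$ to $\mathsf K'$. *)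

theory Defs
  imports Main "HOL-Combinatorics.Permutations"
begin

definition facet :: "'v set set \<Rightarrow> 'v set \<Rightarrow> bool" where
  "facet K s \<longleftrightarrow> s \<in> K \<and> (\<forall>t\<in>K. s \<subseteq> t \<longrightarrow> t = s)"

definition free_with_facet :: "'v set set \<Rightarrow> 'v set \<Rightarrow> 'v set \<Rightarrow> bool" where
  "free_with_facet K s phi \<longleftrightarrow> s \<in> K \<and> facet K phi \<and> s \<subset> phi \<and>
     (\<forall>psi. facet K psi \<and> s \<subset> psi \<longrightarrow> psi = phi)"

definition free_simplex :: "'v set set \<Rightarrow> 'v set \<Rightarrow> bool" where
  "free_simplex K s \<longleftrightarrow> (\<exists>phi. free_with_facet K s phi)"

definition independently_free :: "'v set set \<Rightarrow> 'v set set \<Rightarrow> bool" where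
  "independently_free K S \<longleftrightarrow> (\<forall>s\<in>S. free_simplex K s) \<and>
     (\<forall>s\<in>S. \<forall>s'\<in>S. s \<noteq> s' \<longrightarrow> \<not> (\<exists>t\<in>K. s \<subseteq> t \<and> s' \<subseteq> t))"

definition simplex_orbit :: "'g set \<Rightarrow> ('g \<Rightarrow> 'v \<Rightarrow> 'v) \<Rightarrow> 'v set \<Rightarrow> 'v set set" where
  "simplex_orbit G act s = {act g ` s | g. g \<in> G}"

definition elementary_G_collapse ::
  "'g set \<Rightarrow> ('g \<Rightarrow> 'v \<Rightarrow> 'v) \<Rightarrow> 'v set set \<Rightarrow> 'v set set \<Rightarrow> bool" where
  "elementary_G_collapse G act K K' \<longleftrightarrow>
     (\<exists>s phi. free_with_facet K s phi \<and> card phi = card s + 1 \<and>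
        independently_free K (simplex_orbit G act s) \<and>
        K' = {t \<in> K. \<forall>g\<in>G. \<not> (act g ` s \<subseteq> t)})"

definition G_collapses ::
  "'g set \<Rightarrow> ('g \<Rightarrow> 'v \<Rightarrow> 'v) \<Rightarrow> 'v set set \<Rightarrow> 'v set set \<Rightarrow> bool" where
  "G_collapses G act K K' \<longleftrightarrow> (elementary_G_collapse G act)\<^sup>*\<^sup>* K K'"

definition order_complex :: "'p set \<Rightarrow> ('p \<Rightarrow> 'p \<Rightarrow> bool) \<Rightarrow> 'p set set" where
  "order_complex P le = {C. C \<noteq> {} \<and> finite C \<and> C \<subseteq> P \<and>
      (\<forall>x\<in>C. \<forall>y\<in>C. le x y \<or> le y x)}"

text \<open>Tuples (v_1,...,v_r) are lists of length r, indexed 0..r-1.  The symmetric group S_r is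
  the set of permutations of {0..<r}.\<close>

definition sym_group :: "nat \<Rightarrow> (nat \<Rightarrow> nat) set" where
  "sym_group r = {\<sigma>. \<sigma> permutes {..<r}}"

text \<open>Right action: (v_1,...,v_r) sigma = (v_sigma(1),...,v_sigma(r)).\<close>
definition tuple_act :: "nat \<Rightarrow> (nat \<Rightarrow> nat) \<Rightarrow> 'a list \<Rightarrow> 'a list" where
  "tuple_act r \<sigma> t = map (\<lambda>j. t ! \<sigma> j) [0..<r]"

definition edge_tuples :: "nat \<Rightarrow> 'a set \<Rightarrow> 'a set set \<Rightarrow> 'a list set" where
  "edge_tuples r V E = {t. length t = r \<and> set t \<subseteq> V \<and> set t \<in> E}"

definition pr :: "nat \<Rightarrow> 'a list set \<Rightarrow> 'a set" where
  "pr j F = (\<lambda>t. t ! j) ` F"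

text \<open>Nonempty simplices of B_edge(H) (= the face poset F(B_edge(H))).\<close>
definition B_edge :: "nat \<Rightarrow> 'a set \<Rightarrow> 'a set set \<Rightarrow> 'a list set set" where
  "B_edge r V E = {F. F \<noteq> {} \<and> finite F \<and> F \<subseteq> edge_tuples r V E \<and>
      (\<forall>j<r. \<forall>k<r. j \<noteq> k \<longrightarrow> pr j F \<inter> pr k F = {}) \<and>
      (\<forall>x. length x = r \<and> (\<forall>j<r. x ! j \<in> pr j F) \<longrightarrow> set x \<in> E)}"

definition sd_B_edge :: "nat \<Rightarrow> 'a set \<Rightarrow> 'a set set \<Rightarrow> 'a list set set set" where
  "sd_B_edge r V E = order_complex (B_edge r V E) (\<subseteq>)"

definition sd_act :: "nat \<Rightarrow> (nat \<Rightarrow> nat) \<Rightarrow> 'a list set \<Rightarrow> 'a list set" where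
  "sd_act r \<sigma> F = tuple_act r \<sigma> ` F"

text \<open>The poset P_{K_r^r,H}: maps f from {1..r} (here indices 0..r-1, f given as a list of
  length r) to nonempty subsets of V such that every choice x_j in f(j) consists of distinct
  vertices forming an edge; ordered componentwise by inclusion.\<close>
definition P_KH :: "nat \<Rightarrow> 'a set \<Rightarrow> 'a set set \<Rightarrow> 'a set list set" where
  "P_KH r V E = {f. length f = r \<and> (\<forall>j<r. f ! j \<noteq> {} \<and> f ! j \<subseteq> V) \<and>
      (\<forall>x. length x = r \<and> (\<forall>j<r. x ! j \<in> f ! j) \<longrightarrow> distinct x \<and> set x \<in> E)}"

definition i_map :: "nat \<Rightarrow> 'a set list \<Rightarrow> 'a list set" where
  "i_map r \<phi> = {x. length x = r \<and> (\<forall>j<r. x ! j \<in> \<phi> ! j)}"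

end

theory Submission
  imports Defs "HOL-Library.Product_Lexorder"
begin

locale clos_setup =
  fixes P :: "'b set set" and c :: "'b set \<Rightarrow> 'b set" and G :: "'g set"
    and act :: "'g \<Rightarrow> 'b set \<Rightarrow> 'b set"
  assumes finP: "finite P" and finEl: "x \<in> P \<Longrightarrow> finite x"
  and c_in: "x \<in> P \<Longrightarrow> c x \<in> P" and c_ext: "x \<in> P \<Longrightarrow> x \<subseteq> c x"
  and c_idem: "x \<in> P \<Longrightarrow> c (c x) = c x"
  and c_mono: "x \<in> P \<Longrightarrow> y \<in> P \<Longrightarrow> x \<subseteq> y \<Longrightarrow> c x \<subseteq> c y"
  and act_in: "g \<in> G \<Longrightarrow> x \<in> P \<Longrightarrow> act g x \<in> P"
  and act_card: "g \<in> G \<Longrightarrow> x \<in> P \<Longrightarrow> card (act g x) = card x"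
  and act_mono: "g \<in> G \<Longrightarrow> x \<in> P \<Longrightarrow> y \<in> P \<Longrightarrow> x \<subseteq> y \<Longrightarrow> act g x \<subseteq> act g y"
  and act_inj: "g \<in> G \<Longrightarrow> inj_on (act g) P"
  and act_c: "g \<in> G \<Longrightarrow> x \<in> P \<Longrightarrow> c (act g x) = act g (c x)"
  and act_comp: "g \<in> G \<Longrightarrow> h \<in> G \<Longrightarrow> \<exists>k\<in>G. \<forall>x\<in>P. act h (act g x) = act k x"
  and act_inv: "g \<in> G \<Longrightarrow> \<exists>h\<in>G. \<forall>x\<in>P. act h (act g x) = x"
  and act_id: "\<exists>e\<in>G. \<forall>x\<in>P. act e x = x"
  and act_free: "g \<in> G \<Longrightarrow> h \<in> G \<Longrightarrow> x \<in> P \<Longrightarrow> act g x = act h x \<Longrightarrow> \<forall>y\<in>P. act g y = act h y"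
begin

abbreviation "K \<equiv> order_complex P (\<subseteq>)"

definition nc :: "'b set \<Rightarrow> bool" where "nc x \<longleftrightarrow> c x \<noteq> x"

definition maxnc :: "'b set set \<Rightarrow> 'b set" where
  "maxnc s = (THE x. x \<in> s \<and> nc x \<and> (\<forall>y\<in>s. nc y \<longrightarrow> y \<subseteq> x))"

definition base :: "'b set set \<Rightarrow> bool" where
  "base s \<longleftrightarrow> s \<in> K \<and> (\<exists>x\<in>s. nc x) \<and> c (maxnc s) \<notin> s"

definition key :: "'b set set \<Rightarrow> nat \<times> nat" where
  "key s = (card (maxnc s), card s)"

definition KR :: "'b set set set \<Rightarrow> 'b set set set" where
  "KR R = {t \<in> K. \<forall>p\<in>R. \<not> p \<subseteq> t}"

lemma K_iff: "s \<in> K \<longleftrightarrow> s \<noteq> {} \<and> finite s \<and> s \<subseteq> P \<and> (\<forall>x\<in>s. \<forall>y\<in>s. x \<subseteq> y \<or> y \<subseteq> x)"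
  by (simp add: order_complex_def)

lemma sub_le_card: "x \<in> P \<Longrightarrow> y \<subseteq> x \<Longrightarrow> card x \<le> card y \<Longrightarrow> y = x"
  by (rule card_seteq[OF finEl])

lemma maxnc_ex: assumes "s \<in> K" "\<exists>x\<in>s. nc x"
  shows "\<exists>x. x \<in> s \<and> nc x \<and> (\<forall>y\<in>s. nc y \<longrightarrow> y \<subseteq> x)"
proof -
  let ?A = "{x\<in>s. nc x}"
  have fin: "finite ?A" "?A \<noteq> {}" using assms by (auto simp: K_iff)
  define m where "m = Max (card ` ?A)"
  have "m \<in> card ` ?A" unfolding m_def using fin by (intro Max_in) auto
  then obtain x where x1: "x \<in> ?A" "card x = m" by auto
  have x2: "\<forall>y\<in>?A. card y \<le> card x" using fin x1 unfolding m_def by (auto intro: Max_ge)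
  note x = x1(1) x2
  have "\<forall>y\<in>s. nc y \<longrightarrow> y \<subseteq> x"
  proof (intro ballI impI)
    fix y assume y: "y \<in> s" "nc y"
    have xP: "x \<in> P" "y \<in> P" using x y assms by (auto simp: K_iff)
    have "x \<subseteq> y \<or> y \<subseteq> x" using x y assms by (auto simp: K_iff)
    then show "y \<subseteq> x"
    proof
      assume "x \<subseteq> y"
      then have "x = y" using sub_le_card[OF xP(2)] x y by auto
      then show ?thesis by simp
    qed
  qed
  then show ?thesis using x by auto
qed

lemma maxnc_eq: assumes "x \<in> s" "nc x" "\<forall>y\<in>s. nc y \<longrightarrow> y \<subseteq> x"
  shows "maxnc s = x"
  unfolding maxnc_def using assms by (intro the_equality) auto

lemma maxnc: assumes "s \<in> K" "\<exists>x\<in>s. nc x"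
  shows "maxnc s \<in> s" "nc (maxnc s)" "\<forall>y\<in>s. nc y \<longrightarrow> y \<subseteq> maxnc s"
proof -
  obtain x where x: "x \<in> s" "nc x" "\<forall>y\<in>s. nc y \<longrightarrow> y \<subseteq> x" using maxnc_ex[OF assms] by blast
  have "maxnc s = x" using maxnc_eq[OF x] .
  then show "maxnc s \<in> s" "nc (maxnc s)" "\<forall>y\<in>s. nc y \<longrightarrow> y \<subseteq> maxnc s" using x by auto
qed

lemma closed_c: "x \<in> P \<Longrightarrow> \<not> nc (c x)"
  by (simp add: nc_def c_idem)

lemma K_sub: "t \<in> K \<Longrightarrow> p \<subseteq> t \<Longrightarrow> p \<noteq> {} \<Longrightarrow> p \<in> K"
  unfolding K_iff by (blast intro: finite_subset)

lemma coface:
  assumes b: "base s" and up: "\<forall>p. base p \<and> key s < key p \<longrightarrow> p \<in> R"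
    and t: "t \<in> KR R" and st: "s \<subseteq> t"
  shows "t \<subseteq> insert (c (maxnc s)) s"
proof
  fix y assume yt: "y \<in> t"
  show "y \<in> insert (c (maxnc s)) s"
  proof (rule ccontr)
    assume yn: "y \<notin> insert (c (maxnc s)) s"
    define x where "x = maxnc s"
    have sK: "s \<in> K" and snc: "\<exists>x\<in>s. nc x" and cxs: "c x \<notin> s" using b by (auto simp: base_def x_def)
    have x: "x \<in> s" "nc x" "\<forall>y\<in>s. nc y \<longrightarrow> y \<subseteq> x" using maxnc[OF sK snc] by (auto simp: x_def)
    have tK: "t \<in> K" and tR: "\<forall>p\<in>R. \<not> p \<subseteq> t" using t by (auto simp: KR_def)
    have yP: "y \<in> P" using tK yt by (auto simp: K_iff)
    have sfin: "finite s" using sK by (auto simp: K_iff)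
    have comp: "x \<subseteq> y \<or> y \<subseteq> x" using tK yt x(1) st unfolding K_iff by blast
    show False
    proof (cases "nc y \<and> x \<subseteq> y")
      case True
      define p where "p = insert y s - {c y}"
      have yp: "y \<in> p" using True by (auto simp: p_def nc_def)
      have pt: "p \<subseteq> t" using yt st by (auto simp: p_def)
      have pK: "p \<in> K" using K_sub[OF tK pt] yp by auto
      have mp: "maxnc p = y"
        by (rule maxnc_eq) (use yp True x in \<open>auto simp: p_def\<close>)
      have bp: "base p" using pK yp True mp by (auto simp: base_def p_def)
      have "x \<noteq> y" using yn x(1) by auto
      then have "card x < card y" using True finEl[OF yP] by (intro psubset_card_mono) auto
      then have "key s < key p" by (simp add: key_def mp x_def)
      then have "p \<in> R" using up bp by auto
      then show False using tR pt by auto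
    next
      case False
      define p where "p = insert y s"
      have pt: "p \<subseteq> t" using yt st by (auto simp: p_def)
      have pK: "p \<in> K" using K_sub[OF tK pt] by (auto simp: p_def)
      have mp: "maxnc p = x"
        by (rule maxnc_eq) (use False x comp in \<open>auto simp: p_def\<close>)
      have bp: "base p" using pK x mp cxs yn by (auto simp: base_def p_def x_def)
      have "card p = card s + 1" using sfin yn by (simp add: p_def)
      then have "key s < key p" by (simp add: key_def mp x_def)
      then have "p \<in> R" using up bp by auto
      then show False using tR pt by auto
    qed
  qed
qed

lemma s_in_KR:
  assumes b: "base s" and sR: "s \<notin> R" and low: "\<forall>p\<in>R. key s \<le> key p"
    and Rb: "\<forall>p\<in>R. base p"
  shows "s \<in> KR R"
proof -
  have sK: "s \<in> K" and snc: "\<exists>x\<in>s. nc x" using b by (auto simp: base_def)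
  have x: "maxnc s \<in> s" "nc (maxnc s)" "\<forall>y\<in>s. nc y \<longrightarrow> y \<subseteq> maxnc s" using maxnc[OF sK snc] by auto
  have sfin: "finite s" using sK by (auto simp: K_iff)
  have "\<not> p \<subseteq> s" if pR: "p \<in> R" for p
  proof
    assume ps: "p \<subseteq> s"
    have pK: "p \<in> K" and pnc: "\<exists>x\<in>p. nc x" using Rb pR by (auto simp: base_def)
    have m: "maxnc p \<in> p" "nc (maxnc p)" using maxnc[OF pK pnc] by auto
    have ms: "maxnc p \<subseteq> maxnc s" using x m ps by auto
    have xP: "maxnc s \<in> P" using x sK by (auto simp: K_iff)
    have kle: "key s \<le> key p" using low pR by auto
    then have "card (maxnc s) \<le> card (maxnc p)"
      using card_mono[OF finEl[OF xP] ms] by (auto simp: key_def)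
    then have eq: "maxnc p = maxnc s" using sub_le_card[OF xP ms] by simp
    then have "card s \<le> card p" using kle by (auto simp: key_def)
    then have "p = s" using card_seteq[OF sfin ps] by simp
    then show False using sR pR by simp
  qed
  then show ?thesis using sK by (auto simp: KR_def)
qed

lemma phi_in_KR:
  assumes b: "base s" and sKR: "s \<in> KR R" and low: "\<forall>p\<in>R. key s \<le> key p"
    and Rb: "\<forall>p\<in>R. base p"
  shows "insert (c (maxnc s)) s \<in> KR R"
proof -
  define x where "x = maxnc s"
  have sK: "s \<in> K" and snc: "\<exists>x\<in>s. nc x" using b by (auto simp: base_def)
  have x: "x \<in> s" "nc x" "\<forall>y\<in>s. nc y \<longrightarrow> y \<subseteq> x" using maxnc[OF sK snc] by (auto simp: x_def)
  have xP: "x \<in> P" using x sK by (auto simp: K_iff)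
  have cxs: "c x \<notin> s" using b by (auto simp: base_def x_def)
  have chain: "\<forall>z\<in>s. z \<subseteq> c x \<or> c x \<subseteq> z"
  proof
    fix z assume zs: "z \<in> s"
    have zP: "z \<in> P" using zs sK by (auto simp: K_iff)
    have comp: "x \<subseteq> z \<or> z \<subseteq> x" using sK zs x(1) unfolding K_iff by blast
    show "z \<subseteq> c x \<or> c x \<subseteq> z"
    proof (cases "nc z")
      case True
      then show ?thesis using x(3) zs c_ext[OF xP] by blast
    next
      case False
      then have cz: "c z = z" by (simp add: nc_def)
      from comp show ?thesis
      proof
        assume "x \<subseteq> z" then have "c x \<subseteq> c z" using c_mono xP zP by blast
        then show ?thesis using cz by simp
      next
        assume "z \<subseteq> x" then show ?thesis using c_ext[OF xP] by blast
      qed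
    qed
  qed
  have phiK: "insert (c x) s \<in> K" using sK chain c_in[OF xP] by (auto simp: K_iff)
  have "\<not> p \<subseteq> insert (c x) s" if pR: "p \<in> R" for p
  proof
    assume ps: "p \<subseteq> insert (c x) s"
    have pK: "p \<in> K" and pnc: "\<exists>x\<in>p. nc x" and cp: "c (maxnc p) \<notin> p" using Rb pR by (auto simp: base_def)
    have m: "maxnc p \<in> p" "nc (maxnc p)" using maxnc[OF pK pnc] by auto
    have "maxnc p \<noteq> c x" using m(2) closed_c[OF xP] by auto
    then have ms0: "maxnc p \<in> s" using m ps by auto
    then have ms: "maxnc p \<subseteq> x" using x m by auto
    have kle: "key s \<le> key p" using low pR by auto
    then have "card x \<le> card (maxnc p)"
      using card_mono[OF finEl[OF xP] ms] by (auto simp: key_def x_def)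
    then have eq: "maxnc p = x" using sub_le_card[OF xP ms] by simp
    then have "p \<subseteq> s" using ps cp by auto
    then show False using sKR pR by (auto simp: KR_def)
  qed
  then show ?thesis using phiK by (auto simp: KR_def x_def)
qed

lemma free_step:
  assumes b: "base s" and sR: "s \<notin> R" and low: "\<forall>p\<in>R. key s \<le> key p"
    and Rb: "\<forall>p\<in>R. base p" and up: "\<forall>p. base p \<and> key s < key p \<longrightarrow> p \<in> R"
  shows "free_with_facet (KR R) s (insert (c (maxnc s)) s)"
proof -
  have sKR: "s \<in> KR R" using s_in_KR[OF b sR low Rb] .
  have phi: "insert (c (maxnc s)) s \<in> KR R" using phi_in_KR[OF b sKR low Rb] .
  have cxs: "c (maxnc s) \<notin> s" using b by (auto simp: base_def)
  have cof: "\<And>t. t \<in> KR R \<Longrightarrow> s \<subseteq> t \<Longrightarrow> t \<subseteq> insert (c (maxnc s)) s"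
    using coface[OF b up] by blast
  have fac: "facet (KR R) (insert (c (maxnc s)) s)"
    unfolding facet_def using phi cof by blast
  show ?thesis unfolding free_with_facet_def
  proof (intro conjI allI impI)
    fix psi assume "facet (KR R) psi \<and> s \<subset> psi"
    then have "psi \<subseteq> insert (c (maxnc s)) s" "facet (KR R) psi" using cof by (auto simp: facet_def)
    then show "psi = insert (c (maxnc s)) s" using phi by (auto simp: facet_def)
  qed (use sKR fac cxs in auto)
qed

lemma act_K: assumes g: "g \<in> G" and s: "s \<in> K" shows "act g ` s \<in> K"
proof -
  have "s \<subseteq> P" "finite s" "s \<noteq> {}" and ch: "\<forall>x\<in>s. \<forall>y\<in>s. x \<subseteq> y \<or> y \<subseteq> x" using s by (auto simp: K_iff)
  moreover have "\<forall>x\<in>act g ` s. \<forall>y\<in>act g ` s. x \<subseteq> y \<or> y \<subseteq> x"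
  proof (intro ballI)
    fix a b assume "a \<in> act g ` s" "b \<in> act g ` s"
    then obtain x y where xy: "x \<in> s" "y \<in> s" "a = act g x" "b = act g y" by auto
    have "x \<in> P" "y \<in> P" using xy \<open>s \<subseteq> P\<close> by auto
    then show "a \<subseteq> b \<or> b \<subseteq> a" using ch xy act_mono[OF g] by metis
  qed
  ultimately show ?thesis using act_in[OF g] by (auto simp: K_iff)
qed

lemma act_nc: assumes g: "g \<in> G" and x: "x \<in> P" shows "nc (act g x) \<longleftrightarrow> nc x"
proof -
  have "c (act g x) = act g (c x)" using act_c[OF g x] .
  moreover have "act g (c x) = act g x \<longleftrightarrow> c x = x"
    using inj_onD[OF act_inj[OF g] _ c_in[OF x] x] by auto
  ultimately show ?thesis by (simp add: nc_def)
qed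

lemma act_maxnc: assumes g: "g \<in> G" and s: "s \<in> K" and snc: "\<exists>x\<in>s. nc x"
  shows "maxnc (act g ` s) = act g (maxnc s)"
proof -
  have sP: "s \<subseteq> P" using s by (auto simp: K_iff)
  have m: "maxnc s \<in> s" "nc (maxnc s)" "\<forall>y\<in>s. nc y \<longrightarrow> y \<subseteq> maxnc s" using maxnc[OF s snc] by auto
  show ?thesis
  proof (rule maxnc_eq)
    show "act g (maxnc s) \<in> act g ` s" using m by auto
    show "nc (act g (maxnc s))" using m sP act_nc[OF g] by auto
    show "\<forall>y\<in>act g ` s. nc y \<longrightarrow> y \<subseteq> act g (maxnc s)"
    proof (intro ballI impI)
      fix y assume "y \<in> act g ` s" "nc y"
      then obtain z where z: "z \<in> s" "y = act g z" by auto
      then have "nc z" using \<open>nc y\<close> act_nc[OF g] sP by auto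
      then have "z \<subseteq> maxnc s" using m z by auto
      then show "y \<subseteq> act g (maxnc s)" using act_mono[OF g] z sP m(1) by auto
    qed
  qed
qed

lemma act_base: assumes g: "g \<in> G" and b: "base s" shows "base (act g ` s)" "key (act g ` s) = key s"
proof -
  have s: "s \<in> K" and snc: "\<exists>x\<in>s. nc x" and cs: "c (maxnc s) \<notin> s" using b by (auto simp: base_def)
  have sP: "s \<subseteq> P" using s by (auto simp: K_iff)
  have m: "maxnc s \<in> s" using maxnc[OF s snc] by auto
  have mP: "maxnc s \<in> P" using m sP by auto
  have snc': "\<exists>x\<in>act g ` s. nc x" using snc act_nc[OF g] sP by auto
  have eq: "maxnc (act g ` s) = act g (maxnc s)" using act_maxnc[OF g s snc] .
  have "act g (c (maxnc s)) \<notin> act g ` s"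
  proof
    assume "act g (c (maxnc s)) \<in> act g ` s"
    then obtain z where "z \<in> s" "act g (c (maxnc s)) = act g z" by auto
    then have "c (maxnc s) = z" using inj_onD[OF act_inj[OF g]] c_in[OF mP] sP by auto
    then show False using cs \<open>z \<in> s\<close> by simp
  qed
  then show "base (act g ` s)" using act_K[OF g s] snc' eq act_c[OF g mP] by (auto simp: base_def)
  have "card (act g ` s) = card s" using card_image[OF inj_on_subset[OF act_inj[OF g] sP]] .
  then show "key (act g ` s) = key s" using eq act_card[OF g mP] by (simp add: key_def)
qed

definition Gcl :: "'b set set set \<Rightarrow> bool" where
  "Gcl R \<longleftrightarrow> (\<forall>p\<in>R. \<forall>g\<in>G. act g ` p \<in> R)"

lemma act_inv_img: assumes g: "g \<in> G" and sP: "s \<subseteq> P" shows "\<exists>h\<in>G. act h ` act g ` s = s"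
proof -
  obtain h where h: "h \<in> G" "\<forall>x\<in>P. act h (act g x) = x" using act_inv[OF g] by blast
  have "act h ` act g ` s = (\<lambda>x. x) ` s" unfolding image_image
    by (rule image_cong) (use h(2) sP in auto)
  then show ?thesis using h(1) by blast
qed

lemma step:
  assumes Rb: "\<forall>p\<in>R. base p" and Rg: "Gcl R" and b: "base s" and sR: "s \<notin> R"
    and low: "\<forall>p\<in>R. key s \<le> key p" and up: "\<forall>p. base p \<and> key s < key p \<longrightarrow> p \<in> R"
  shows "elementary_G_collapse G act (KR R) (KR (R \<union> simplex_orbit G act s))"
proof -
  have sK: "s \<in> K" and snc: "\<exists>x\<in>s. nc x" and cs: "c (maxnc s) \<notin> s" using b by (auto simp: base_def)
  have sP: "s \<subseteq> P" and sfin: "finite s" using sK by (auto simp: K_iff)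
  have m: "maxnc s \<in> s" "nc (maxnc s)" using maxnc[OF sK snc] by auto
  have mP: "maxnc s \<in> P" using m sP by auto
  have fr: "free_with_facet (KR R) s (insert (c (maxnc s)) s)" using free_step[OF b sR low Rb up] .
  have cd: "card (insert (c (maxnc s)) s) = card s + 1" using sfin cs by simp
  have orb_free: "free_with_facet (KR R) (act g ` s) (insert (c (maxnc (act g ` s))) (act g ` s))"
    if g: "g \<in> G" for g
  proof -
    have b': "base (act g ` s)" and k': "key (act g ` s) = key s" using act_base[OF g b] by auto
    have "act g ` s \<notin> R"
    proof
      assume "act g ` s \<in> R"
      obtain h where "h \<in> G" "act h ` act g ` s = s" using act_inv_img[OF g sP] by blast
      moreover have "act h ` (act g ` s) \<in> R" using Rg \<open>act g ` s \<in> R\<close> \<open>h \<in> G\<close> unfolding Gcl_def by blast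
      ultimately show False using sR by simp
    qed
    moreover have "\<forall>p\<in>R. key (act g ` s) \<le> key p" using low k' by simp
    moreover have "\<forall>p. base p \<and> key (act g ` s) < key p \<longrightarrow> p \<in> R" using up k' by simp
    ultimately show ?thesis using free_step[OF b' _ _ Rb] by blast
  qed
  have indep: "independently_free (KR R) (simplex_orbit G act s)"
    unfolding independently_free_def
  proof (intro conjI ballI)
    fix s1 assume "s1 \<in> simplex_orbit G act s"
    then obtain g where "g \<in> G" "s1 = act g ` s" by (auto simp: simplex_orbit_def)
    then show "free_simplex (KR R) s1" using orb_free by (auto simp: free_simplex_def)
  next
    fix s1 s2 assume "s1 \<in> simplex_orbit G act s" "s2 \<in> simplex_orbit G act s"
    then obtain g h where g: "g \<in> G" "s1 = act g ` s" and h: "h \<in> G" "s2 = act h ` s"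
      by (auto simp: simplex_orbit_def)
    show "s1 \<noteq> s2 \<longrightarrow> \<not> (\<exists>t\<in>KR R. s1 \<subseteq> t \<and> s2 \<subseteq> t)"
    proof (intro impI notI)
      assume ne: "s1 \<noteq> s2" and "\<exists>t\<in>KR R. s1 \<subseteq> t \<and> s2 \<subseteq> t"
      then obtain t where t: "t \<in> KR R" "s1 \<subseteq> t" "s2 \<subseteq> t" by blast
      have b1: "base s1" and k1: "key s1 = key s" using act_base[OF g(1) b] g(2) by auto
      have up1: "\<forall>p. base p \<and> key s1 < key p \<longrightarrow> p \<in> R" using up k1 by simp
      have tsub: "t \<subseteq> insert (c (maxnc s1)) s1" using coface[OF b1 up1 t(1) t(2)] .
      have e1: "maxnc s1 = act g (maxnc s)" using act_maxnc[OF g(1) sK snc] g(2) by simp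
      have e2: "maxnc s2 = act h (maxnc s)" using act_maxnc[OF h(1) sK snc] h(2) by simp
      have s1K: "s1 \<in> K" and s1nc: "\<exists>x\<in>s1. nc x" using b1 by (auto simp: base_def)
      have m1: "maxnc s1 \<in> s1" "\<forall>y\<in>s1. nc y \<longrightarrow> y \<subseteq> maxnc s1" using maxnc[OF s1K s1nc] by auto
      have m1P: "maxnc s1 \<in> P" using act_in[OF g(1) mP] e1 by simp
      have hm: "act h (maxnc s) \<in> s2" using m h by auto
      have hnc: "nc (act h (maxnc s))" using act_nc[OF h(1) mP] m by simp
      have "act h (maxnc s) \<noteq> c (maxnc s1)" using hnc closed_c[OF m1P] by auto
      then have "act h (maxnc s) \<in> s1" using hm t tsub by auto
      then have sub: "act h (maxnc s) \<subseteq> maxnc s1" using m1 hnc by auto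
      have "card (maxnc s1) \<le> card (act h (maxnc s))"
        using e1 act_card[OF g(1) mP] act_card[OF h(1) mP] by simp
      then have "act h (maxnc s) = act g (maxnc s)" using sub_le_card[OF m1P sub] e1 by simp
      then have "\<forall>y\<in>P. act h y = act g y" using act_free[OF h(1) g(1) mP] by blast
      then have "s1 = s2" unfolding g(2) h(2) by (intro image_cong) (use sP in auto)
      then show False using ne by simp
    qed
  qed
  have eqK: "KR (R \<union> simplex_orbit G act s) = {t \<in> KR R. \<forall>g\<in>G. \<not> act g ` s \<subseteq> t}"
    unfolding KR_def simplex_orbit_def by blast
  show ?thesis unfolding elementary_G_collapse_def
    by (rule exI[of _ s], rule exI[of _ "insert (c (maxnc s)) s"]) (use fr cd indep eqK in simp)
qed

definition upcl :: "'b set set set \<Rightarrow> bool" where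
  "upcl R \<longleftrightarrow> (\<forall>p\<in>R. \<forall>q. base q \<and> key p < key q \<longrightarrow> q \<in> R)"

lemma finB: "finite (Collect base)"
proof (rule finite_subset)
  show "Collect base \<subseteq> Pow P" by (auto simp: base_def K_iff)
  show "finite (Pow P)" using finP by simp
qed

lemma collapse_all:
  "R \<subseteq> Collect base \<Longrightarrow> Gcl R \<Longrightarrow> upcl R \<Longrightarrow> G_collapses G act (KR R) (KR (Collect base))"
proof (induction "card (Collect base - R)" arbitrary: R rule: less_induct)
  case less
  let ?B = "Collect base"
  show ?case
  proof (cases "?B - R = {}")
    case True
    then have "R = ?B" using less.prems by auto
    then show ?thesis by (simp add: G_collapses_def)
  next
    case False
    have fin: "finite (?B - R)" using finB by simp
    define k where "k = Max (key ` (?B - R))"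
    have "k \<in> key ` (?B - R)" unfolding k_def using fin False by (intro Max_in) auto
    then obtain s where s: "s \<in> ?B - R" "key s = k" by auto
    have hmax: "\<forall>p\<in>?B - R. key p \<le> key s" using fin s unfolding k_def by (auto intro: Max_ge)
    have b: "base s" and sR: "s \<notin> R" using s by auto
    have up: "\<forall>p. base p \<and> key s < key p \<longrightarrow> p \<in> R"
    proof (intro allI impI)
      fix p assume p: "base p \<and> key s < key p"
      show "p \<in> R"
      proof (rule ccontr)
        assume "p \<notin> R"
        then have "key p \<le> key s" using hmax p by auto
        then show False using p by (simp add: leD)
      qed
    qed
    have low: "\<forall>p\<in>R. key s \<le> key p"
    proof
      fix p assume pR: "p \<in> R"
      show "key s \<le> key p"
      proof (rule ccontr)
        assume "\<not> key s \<le> key p"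
        then have "key p < key s" by simp
        then have "s \<in> R" using less.prems(3) pR b unfolding upcl_def by blast
        then show False using sR by simp
      qed
    qed
    have Rb: "\<forall>p\<in>R. base p" using less.prems(1) by auto
    define R' where "R' = R \<union> simplex_orbit G act s"
    have st: "elementary_G_collapse G act (KR R) (KR R')"
      unfolding R'_def using step[OF Rb less.prems(2) b sR low up] .
    have sP: "s \<subseteq> P" using b by (auto simp: base_def K_iff)
    have R'B: "R' \<subseteq> ?B" using less.prems(1) act_base(1)[OF _ b]
      by (auto simp: R'_def simplex_orbit_def)
    have R'G: "Gcl R'" unfolding Gcl_def
    proof (intro ballI)
      fix p g assume p: "p \<in> R'" and g: "g \<in> G"
      show "act g ` p \<in> R'"
      proof (cases "p \<in> R")
        case True then show ?thesis using less.prems(2) g by (auto simp: Gcl_def R'_def)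
      next
        case False
        then obtain h where h: "h \<in> G" "p = act h ` s" using p by (auto simp: R'_def simplex_orbit_def)
        obtain k where k: "k \<in> G" "\<forall>x\<in>P. act g (act h x) = act k x" using act_comp[OF h(1) g] by blast
        have "act g ` p = act k ` s" unfolding h(2) image_image
          by (rule image_cong) (use k sP in auto)
        then show ?thesis using k(1) by (auto simp: R'_def simplex_orbit_def)
      qed
    qed
    have R'u: "upcl R'" unfolding upcl_def
    proof (intro ballI allI impI)
      fix p q assume p: "p \<in> R'" and q: "base q \<and> key p < key q"
      show "q \<in> R'"
      proof (cases "p \<in> R")
        case True then show ?thesis using less.prems(3) q by (auto simp: upcl_def R'_def)
      next
        case False
        then obtain h where h: "h \<in> G" "p = act h ` s" using p by (auto simp: R'_def simplex_orbit_def)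
        then have "key p = key s" using act_base(2)[OF h(1) b] by simp
        then show ?thesis using up q by (auto simp: R'_def)
      qed
    qed
    obtain e where e: "e \<in> G" "\<forall>x\<in>P. act e x = x" using act_id by blast
    have "act e ` s = (\<lambda>x. x) ` s" by (rule image_cong) (use e sP in auto)
    then have "act e ` s = s" by simp
    then have "s \<in> R'" using e(1) unfolding R'_def simplex_orbit_def by blast
    then have "?B - R' \<subset> ?B - R" using s by (auto simp: R'_def)
    then have "card (?B - R') < card (?B - R)" using fin by (rule psubset_card_mono[rotated])
    then have "G_collapses G act (KR R') (KR ?B)" using less.hyps[OF _ R'B R'G R'u] by simp
    then show ?thesis using st unfolding G_collapses_def
      by (rule converse_rtranclp_into_rtranclp[rotated])
  qed
qed

lemma KR_all: "KR (Collect base) = order_complex (c ` P) (\<subseteq>)"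
proof (intro equalityI subsetI)
  fix t assume t: "t \<in> KR (Collect base)"
  have tK: "t \<in> K" and nb: "\<forall>p. base p \<longrightarrow> \<not> p \<subseteq> t" using t by (auto simp: KR_def)
  have "\<forall>y\<in>t. \<not> nc y"
  proof (rule ccontr)
    assume "\<not> (\<forall>y\<in>t. \<not> nc y)"
    then have tnc: "\<exists>y\<in>t. nc y" by blast
    define x where "x = maxnc t"
    have x: "x \<in> t" "nc x" "\<forall>y\<in>t. nc y \<longrightarrow> y \<subseteq> x" using maxnc[OF tK tnc] by (auto simp: x_def)
    define p where "p = t - {c x}"
    have xp: "x \<in> p" using x by (auto simp: p_def nc_def)
    have pK: "p \<in> K" using K_sub[OF tK, of p] xp by (auto simp: p_def)
    have "maxnc p = x" by (rule maxnc_eq) (use xp x in \<open>auto simp: p_def\<close>)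
    then have "base p" using pK xp x by (auto simp: base_def p_def)
    then show False using nb by (auto simp: p_def)
  qed
  then have "t \<subseteq> c ` P"
  proof -
    assume a: "\<forall>y\<in>t. \<not> nc y"
    show "t \<subseteq> c ` P"
    proof
      fix y assume "y \<in> t"
      then have "y \<in> P" "c y = y" using tK a by (auto simp: K_iff nc_def)
      then show "y \<in> c ` P" by (metis image_eqI)
    qed
  qed
  then show "t \<in> order_complex (c ` P) (\<subseteq>)" using tK by (auto simp: K_iff order_complex_def)
next
  fix t assume t: "t \<in> order_complex (c ` P) (\<subseteq>)"
  have cP: "c ` P \<subseteq> P" using c_in by auto
  have tK: "t \<in> K" using t cP unfolding order_complex_def by blast
  have "\<not> p \<subseteq> t" if "base p" for p
  proof
    assume pt: "p \<subseteq> t"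
    obtain y where "y \<in> p" "nc y" using \<open>base p\<close> by (auto simp: base_def)
    then obtain z where "z \<in> P" "y = c z" using pt t by (auto simp: order_complex_def)
    then show False using \<open>nc y\<close> closed_c by simp
  qed
  then show "t \<in> KR (Collect base)" using tK by (auto simp: KR_def)
qed

theorem collapses_main: "G_collapses G act K (order_complex (c ` P) (\<subseteq>))"
proof -
  have "G_collapses G act (KR {}) (KR (Collect base))"
    by (rule collapse_all) (auto simp: Gcl_def upcl_def)
  moreover have "KR {} = K" by (simp add: KR_def)
  ultimately show ?thesis using KR_all by simp
qed

end

definition cl :: "nat \<Rightarrow> 'a list set \<Rightarrow> 'a list set" where
  "cl r F = {x. length x = r \<and> (\<forall>j<r. x ! j \<in> pr j F)}"

lemma nth_ta: "j < r \<Longrightarrow> tuple_act r g t ! j = t ! g j"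
  by (simp add: tuple_act_def)

lemma length_ta[simp]: "length (tuple_act r g t) = r"
  by (simp add: tuple_act_def)

lemma sym_perm: "g \<in> sym_group r \<Longrightarrow> g permutes {..<r}"
  by (simp add: sym_group_def)

lemma perm_lt: "g permutes {..<r} \<Longrightarrow> j < r \<Longrightarrow> g j < r"
  using permutes_in_image by fastforce

lemma ta_comp: assumes h: "h permutes {..<r}"
  shows "tuple_act r h (tuple_act r g t) = tuple_act r (g \<circ> h) t"
  by (rule nth_equalityI) (auto simp: nth_ta perm_lt[OF h])

lemma ta_id: "length t = r \<Longrightarrow> tuple_act r id t = t"
  by (rule nth_equalityI) (auto simp: nth_ta)

lemma ta_inv: assumes g: "g permutes {..<r}" and t: "length t = r"
  shows "tuple_act r (inv g) (tuple_act r g t) = t"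
  by (simp only: ta_comp[OF permutes_inv[OF g]] permutes_inv_o(1)[OF g] ta_id[OF t])

lemma ta_inv2: assumes g: "g permutes {..<r}" and t: "length t = r"
  shows "tuple_act r g (tuple_act r (inv g) t) = t"
  by (simp only: ta_comp[OF g] permutes_inv_o(2)[OF g] ta_id[OF t])

lemma set_ta: assumes g: "g permutes {..<r}" and t: "length t = r"
  shows "set (tuple_act r g t) = set t"
proof -
  have "set (tuple_act r g t) = (\<lambda>j. t ! g j) ` {..<r}" by (auto simp: tuple_act_def)
  also have "\<dots> = (\<lambda>i. t ! i) ` (g ` {..<r})" by (simp add: image_image)
  also have "\<dots> = (\<lambda>i. t ! i) ` {..<r}" using permutes_image[OF g] by simp
  also have "\<dots> = set t" using t by (auto simp: in_set_conv_nth)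
  finally show ?thesis .
qed

lemma pr_act: "j < r \<Longrightarrow> pr j (sd_act r g F) = pr (g j) F"
  by (auto simp: pr_def sd_act_def nth_ta image_image)

lemma pr_mono: "F \<subseteq> F' \<Longrightarrow> pr j F \<subseteq> pr j F'"
  by (auto simp: pr_def)

lemma pr_ne: "F \<noteq> {} \<Longrightarrow> pr j F \<noteq> {}"
  by (auto simp: pr_def)

lemma map_in_cl: "(\<And>j. j < r \<Longrightarrow> f j \<in> pr j F) \<Longrightarrow> map f [0..<r] \<in> cl r F"
  by (auto simp: cl_def)

lemma B_edgeD:
  assumes "F \<in> B_edge r V E"
  shows "F \<noteq> {}" "finite F" "\<And>t. t \<in> F \<Longrightarrow> length t = r \<and> set t \<subseteq> V \<and> set t \<in> E"
    "\<And>j k. j < r \<Longrightarrow> k < r \<Longrightarrow> j \<noteq> k \<Longrightarrow> pr j F \<inter> pr k F = {}"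
    "\<And>x. length x = r \<Longrightarrow> (\<forall>j<r. x ! j \<in> pr j F) \<Longrightarrow> set x \<in> E"
  using assms by (auto simp: B_edge_def edge_tuples_def)

lemma finite_edge_tuples: "finite V \<Longrightarrow> finite (edge_tuples r V E)"
proof -
  assume "finite V"
  then have "finite {xs. set xs \<subseteq> V \<and> length xs = r}" by (rule finite_lists_length_eq)
  then show ?thesis by (rule finite_subset[rotated]) (auto simp: edge_tuples_def)
qed

lemma F_sub_cl: "F \<in> B_edge r V E \<Longrightarrow> F \<subseteq> cl r F"
  using B_edgeD(3) by (fastforce simp: cl_def pr_def)

lemma pr_cl: assumes F: "F \<in> B_edge r V E" and j: "j < r" shows "pr j (cl r F) = pr j F"
proof
  show "pr j (cl r F) \<subseteq> pr j F" using j by (auto simp: pr_def cl_def)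
  show "pr j F \<subseteq> pr j (cl r F)" using pr_mono[OF F_sub_cl[OF F]] .
qed

lemma pr_V: assumes F: "F \<in> B_edge r V E" and j: "j < r" shows "pr j F \<subseteq> V"
proof
  fix v assume "v \<in> pr j F"
  then obtain t where t: "t \<in> F" "v = t ! j" by (auto simp: pr_def)
  then have "length t = r" "set t \<subseteq> V" using B_edgeD(3)[OF F] by auto
  then show "v \<in> V" using t j by auto
qed

lemma cl_in: assumes fV: "finite V" and F: "F \<in> B_edge r V E" shows "cl r F \<in> B_edge r V E"
proof -
  have sub: "cl r F \<subseteq> edge_tuples r V E"
  proof
    fix x assume x: "x \<in> cl r F"
    then have l: "length x = r" and xj: "\<forall>j<r. x ! j \<in> pr j F" by (auto simp: cl_def)
    have "set x \<in> E" using B_edgeD(5)[OF F l xj] .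
    moreover have "set x \<subseteq> V"
    proof
      fix v assume "v \<in> set x"
      then obtain i where i: "i < r" "v = x ! i" using l by (auto simp: in_set_conv_nth)
      then show "v \<in> V" using xj pr_V[OF F i(1)] by auto
    qed
    ultimately show "x \<in> edge_tuples r V E" using l by (simp add: edge_tuples_def)
  qed
  have ne: "cl r F \<noteq> {}" using F_sub_cl[OF F] B_edgeD(1)[OF F] by auto
  have fin: "finite (cl r F)" using finite_subset[OF sub finite_edge_tuples[OF fV]] .
  show ?thesis unfolding B_edge_def
    using ne fin sub pr_cl[OF F] B_edgeD(4)[OF F] B_edgeD(5)[OF F] by simp
qed

lemma cl_idem: assumes F: "F \<in> B_edge r V E" shows "cl r (cl r F) = cl r F"
proof -
  have eq: "\<And>x. (\<forall>j<r. x ! j \<in> pr j (cl r F)) = (\<forall>j<r. x ! j \<in> pr j F)" using pr_cl[OF F] by auto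
  show ?thesis unfolding cl_def[of r "cl r F"] eq by (simp add: cl_def)
qed

lemma cl_mono: "F \<subseteq> F' \<Longrightarrow> cl r F \<subseteq> cl r F'"
  using pr_mono unfolding cl_def by blast

lemma finite_B_edge: "finite V \<Longrightarrow> finite (B_edge r V E)"
  by (rule finite_subset[of _ "Pow (edge_tuples r V E)"]) (auto simp: B_edge_def finite_edge_tuples)

lemma Blen: "F \<in> B_edge r V E \<Longrightarrow> t \<in> F \<Longrightarrow> length t = r"
  using B_edgeD(3) by blast

lemma sd_inv: assumes g: "g permutes {..<r}" and F: "\<forall>t\<in>F. length t = r"
  shows "sd_act r (inv g) (sd_act r g F) = F"
proof -
  have "sd_act r (inv g) (sd_act r g F) = (\<lambda>t. t) ` F"
    unfolding sd_act_def image_image by (rule image_cong) (use ta_inv[OF g] F in auto)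
  then show ?thesis by simp
qed

lemma sd_comp: assumes h: "h permutes {..<r}"
  shows "sd_act r h (sd_act r g F) = sd_act r (g \<circ> h) F"
  unfolding sd_act_def image_image ta_comp[OF h] ..

lemma act_in_B: assumes gs: "g \<in> sym_group r" and F: "F \<in> B_edge r V E"
  shows "sd_act r g F \<in> B_edge r V E"
proof -
  have g: "g permutes {..<r}" using sym_perm[OF gs] .
  have sub: "sd_act r g F \<subseteq> edge_tuples r V E"
  proof
    fix x assume "x \<in> sd_act r g F"
    then obtain t where t: "t \<in> F" "x = tuple_act r g t" by (auto simp: sd_act_def)
    then have "length t = r \<and> set t \<subseteq> V \<and> set t \<in> E" using B_edgeD(3)[OF F] by blast
    then show "x \<in> edge_tuples r V E" using t set_ta[OF g] by (auto simp: edge_tuples_def)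
  qed
  have ne: "sd_act r g F \<noteq> {}" using B_edgeD(1)[OF F] by (simp add: sd_act_def)
  have fin: "finite (sd_act r g F)" using B_edgeD(2)[OF F] by (simp add: sd_act_def)
  have disj: "\<forall>j<r. \<forall>k<r. j \<noteq> k \<longrightarrow> pr j (sd_act r g F) \<inter> pr k (sd_act r g F) = {}"
  proof (intro allI impI)
    fix j k assume jk: "j < r" "k < r" "j \<noteq> k"
    have "g j \<noteq> g k" using jk permutes_inj[OF g] by (auto dest: injD)
    then show "pr j (sd_act r g F) \<inter> pr k (sd_act r g F) = {}"
      using B_edgeD(4)[OF F perm_lt[OF g jk(1)] perm_lt[OF g jk(2)]] jk by (simp add: pr_act)
  qed
  have edge: "\<forall>x. length x = r \<and> (\<forall>j<r. x ! j \<in> pr j (sd_act r g F)) \<longrightarrow> set x \<in> E"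
  proof (intro allI impI)
    fix x assume x: "length x = r \<and> (\<forall>j<r. x ! j \<in> pr j (sd_act r g F))"
    have gi: "inv g permutes {..<r}" using permutes_inv[OF g] .
    define y where "y = tuple_act r (inv g) x"
    have "\<forall>i<r. y ! i \<in> pr i F"
    proof (intro allI impI)
      fix i assume i: "i < r"
      have "inv g i < r" using perm_lt[OF gi i] .
      then have "x ! inv g i \<in> pr (g (inv g i)) F" using x by (simp add: pr_act)
      then show "y ! i \<in> pr i F" using i by (simp add: y_def nth_ta permutes_inverses(1)[OF g])
    qed
    then have "set y \<in> E" using B_edgeD(5)[OF F] by (simp add: y_def)
    moreover have "set y = set x" using set_ta[OF gi, of x] x by (simp add: y_def)
    ultimately show "set x \<in> E" by simp
  qed
  show ?thesis unfolding B_edge_def using sub ne fin disj edge by blast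
qed

lemma act_c_B: assumes gs: "g \<in> sym_group r" and F: "F \<in> B_edge r V E"
  shows "cl r (sd_act r g F) = sd_act r g (cl r F)"
proof -
  have g: "g permutes {..<r}" using sym_perm[OF gs] .
  have gi: "inv g permutes {..<r}" using permutes_inv[OF g] .
  show ?thesis
  proof
    show "cl r (sd_act r g F) \<subseteq> sd_act r g (cl r F)"
    proof
      fix x assume "x \<in> cl r (sd_act r g F)"
      then have x: "length x = r" "\<forall>j<r. x ! j \<in> pr (g j) F" by (auto simp: cl_def pr_act)
      define y where "y = tuple_act r (inv g) x"
      have "\<forall>i<r. y ! i \<in> pr i F"
      proof (intro allI impI)
        fix i assume i: "i < r"
        have "x ! inv g i \<in> pr (g (inv g i)) F" using x perm_lt[OF gi i] by simp
        then show "y ! i \<in> pr i F" using i by (simp add: y_def nth_ta permutes_inverses(1)[OF g])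
      qed
      then have "y \<in> cl r F" by (simp add: cl_def y_def)
      moreover have "tuple_act r g y = x" using ta_inv2[OF g x(1)] by (simp add: y_def)
      ultimately show "x \<in> sd_act r g (cl r F)" unfolding sd_act_def by blast
    qed
    show "sd_act r g (cl r F) \<subseteq> cl r (sd_act r g F)"
    proof
      fix x assume "x \<in> sd_act r g (cl r F)"
      then obtain y where y: "y \<in> cl r F" "x = tuple_act r g y" by (auto simp: sd_act_def)
      have "\<forall>j<r. x ! j \<in> pr j (sd_act r g F)"
        using y perm_lt[OF g] by (auto simp: cl_def pr_act nth_ta)
      then show "x \<in> cl r (sd_act r g F)" using y by (simp add: cl_def)
    qed
  qed
qed

lemma act_free_B: fixes F F' :: "'a list set" assumes gs: "g \<in> sym_group r" and hs: "h \<in> sym_group r" and F: "F \<in> B_edge r V E"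
  and eq: "sd_act r g F = sd_act r h F"
  shows "sd_act r g F' = sd_act r h F'"
proof -
  have g: "g permutes {..<r}" and h: "h permutes {..<r}" using sym_perm gs hs by auto
  have "\<forall>j<r. g j = h j"
  proof (intro allI impI)
    fix j assume j: "j < r"
    have "pr (g j) F = pr (h j) F" using pr_act[OF j, of g F] pr_act[OF j, of h F] eq by simp
    moreover have "pr (g j) F \<noteq> {}" using pr_ne B_edgeD(1)[OF F] by blast
    ultimately show "g j = h j" using B_edgeD(4)[OF F perm_lt[OF g j] perm_lt[OF h j]] by auto
  qed
  then have "\<And>t::'a list. tuple_act r g t = tuple_act r h t" by (simp add: tuple_act_def)
  then have "tuple_act r g = (tuple_act r h :: 'a list \<Rightarrow> 'a list)" by (intro ext)
  then show ?thesis by (simp add: sd_act_def)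
qed


lemma B_setup: assumes fV: "finite V"
  shows "clos_setup (B_edge r V E) (cl r) (sym_group r) (sd_act r)"
proof
  show "finite (B_edge r V E)" using finite_B_edge[OF fV] .
  show "\<And>x. x \<in> B_edge r V E \<Longrightarrow> finite x" using B_edgeD(2) by blast
  show "\<And>x. x \<in> B_edge r V E \<Longrightarrow> cl r x \<in> B_edge r V E" using cl_in[OF fV] by blast
  show "\<And>x. x \<in> B_edge r V E \<Longrightarrow> x \<subseteq> cl r x" using F_sub_cl by blast
  show "\<And>x. x \<in> B_edge r V E \<Longrightarrow> cl r (cl r x) = cl r x" using cl_idem by blast
  show "\<And>x y. x \<subseteq> y \<Longrightarrow> cl r x \<subseteq> cl r y" using cl_mono by blast
  show "\<And>g x. g \<in> sym_group r \<Longrightarrow> x \<in> B_edge r V E \<Longrightarrow> sd_act r g x \<in> B_edge r V E"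
    using act_in_B by blast
  show "card (sd_act r g x) = card x" if g: "g \<in> sym_group r" and x: "x \<in> B_edge r V E" for g x
  proof -
    have "inj_on (tuple_act r g) x"
      by (rule inj_on_inverseI[where g = "tuple_act r (inv g)"]) (use ta_inv[OF sym_perm[OF g]] Blen[OF x] in auto)
    then show ?thesis by (simp add: sd_act_def card_image)
  qed
  show "\<And>g x y. x \<subseteq> y \<Longrightarrow> sd_act r g x \<subseteq> sd_act r g y" by (auto simp: sd_act_def)
  show "inj_on (sd_act r g) (B_edge r V E)" if g: "g \<in> sym_group r" for g
  proof (rule inj_on_inverseI[where g = "sd_act r (inv g)"])
    fix F assume F: "F \<in> B_edge r V E"
    show "sd_act r (inv g) (sd_act r g F) = F"
      by (rule sd_inv[OF sym_perm[OF g]]) (use Blen[OF F] in blast)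
  qed
  show "\<And>g x. g \<in> sym_group r \<Longrightarrow> x \<in> B_edge r V E \<Longrightarrow> cl r (sd_act r g x) = sd_act r g (cl r x)"
    using act_c_B by blast
  show "\<exists>k\<in>sym_group r. \<forall>x\<in>B_edge r V E. sd_act r h (sd_act r g x) = sd_act r k x"
    if "g \<in> sym_group r" "h \<in> sym_group r" for g h
  proof (rule bexI[of _ "g \<circ> h"])
    show "g \<circ> h \<in> sym_group r" unfolding sym_group_def
      using permutes_compose[OF sym_perm[OF that(2)] sym_perm[OF that(1)]] by simp
    show "\<forall>x\<in>B_edge r V E. sd_act r h (sd_act r g x) = sd_act r (g \<circ> h) x"
      using sd_comp[OF sym_perm[OF that(2)]] by blast
  qed
  show "\<exists>h\<in>sym_group r. \<forall>x\<in>B_edge r V E. sd_act r h (sd_act r g x) = x" if "g \<in> sym_group r" for g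
  proof (rule bexI[of _ "inv g"])
    show "inv g \<in> sym_group r" unfolding sym_group_def using permutes_inv[OF sym_perm[OF that]] by simp
    show "\<forall>x\<in>B_edge r V E. sd_act r (inv g) (sd_act r g x) = x"
    proof
      fix F assume F: "F \<in> B_edge r V E"
      show "sd_act r (inv g) (sd_act r g F) = F"
        by (rule sd_inv[OF sym_perm[OF that]]) (use Blen[OF F] in blast)
    qed
  qed
  show "\<exists>e\<in>sym_group r. \<forall>x\<in>B_edge r V E. sd_act r e x = x"
  proof (rule bexI[of _ id])
    show "id \<in> sym_group r" by (simp add: sym_group_def)
    show "\<forall>x\<in>B_edge r V E. sd_act r id x = x"
    proof
      fix F assume F: "F \<in> B_edge r V E"
      have "sd_act r id F = (\<lambda>t. t) ` F" unfolding sd_act_def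
        by (rule image_cong) (use ta_id Blen[OF F] in auto)
      then show "sd_act r id F = F" by simp
    qed
  qed
  show "\<And>g h x. g \<in> sym_group r \<Longrightarrow> h \<in> sym_group r \<Longrightarrow> x \<in> B_edge r V E \<Longrightarrow>
      sd_act r g x = sd_act r h x \<Longrightarrow> \<forall>y\<in>B_edge r V E. sd_act r g y = sd_act r h y"
    using act_free_B by blast
qed


lemma pick: "(\<And>i. i < r \<Longrightarrow> f i \<in> \<phi> ! i) \<Longrightarrow> map f [0..<r] \<in> i_map r \<phi>"
  by (auto simp: i_map_def)

lemma img_sub: assumes F: "F \<in> B_edge r V E" shows "cl r F \<in> i_map r ` P_KH r V E"
proof -
  define \<phi> where "\<phi> = map (\<lambda>j. pr j F) [0..<r]"
  have nth\<phi>: "\<And>j. j < r \<Longrightarrow> \<phi> ! j = pr j F" by (simp add: \<phi>_def)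
  have "\<phi> \<in> P_KH r V E" unfolding P_KH_def
  proof (intro CollectI conjI allI impI)
    show "length \<phi> = r" by (simp add: \<phi>_def)
    fix j assume j: "j < r"
    show "\<phi> ! j \<noteq> {}" using nth\<phi>[OF j] pr_ne B_edgeD(1)[OF F] by simp
    show "\<phi> ! j \<subseteq> V" using nth\<phi>[OF j] pr_V[OF F j] by simp
  next
    fix x assume x: "length x = r \<and> (\<forall>j<r. x ! j \<in> \<phi> ! j)"
    then have x': "length x = r" "\<forall>j<r. x ! j \<in> pr j F" using nth\<phi> by auto
    show "set x \<in> E" using B_edgeD(5)[OF F x'(1) x'(2)] .
    show "distinct x" unfolding distinct_conv_nth
    proof (intro allI impI)
      fix i j assume ij: "i < length x" "j < length x" "i \<noteq> j"
      show "x ! i \<noteq> x ! j" using B_edgeD(4)[OF F, of i j] ij x' by auto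
    qed
  qed
  moreover have "cl r F = i_map r \<phi>" using nth\<phi> by (auto simp: cl_def i_map_def)
  ultimately show ?thesis by blast
qed

lemma img_sup: assumes fV: "finite V" and P: "\<phi> \<in> P_KH r V E"
  shows "i_map r \<phi> \<in> cl r ` B_edge r V E"
proof -
  define F where "F = i_map r \<phi>"
  have len: "length \<phi> = r" and ne: "\<And>j. j < r \<Longrightarrow> \<phi> ! j \<noteq> {}" and sV: "\<And>j. j < r \<Longrightarrow> \<phi> ! j \<subseteq> V"
    and ch: "\<And>x. length x = r \<Longrightarrow> (\<forall>j<r. x ! j \<in> \<phi> ! j) \<Longrightarrow> distinct x \<and> set x \<in> E"
    using P by (auto simp: P_KH_def)
  define sel where "sel k = (SOME y. y \<in> \<phi> ! k)" for k
  have sel: "\<And>k. k < r \<Longrightarrow> sel k \<in> \<phi> ! k" unfolding sel_def by (rule someI_ex) (use ne in blast)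
  have Fi: "\<And>x. x \<in> F \<longleftrightarrow> length x = r \<and> (\<forall>j<r. x ! j \<in> \<phi> ! j)" by (simp add: F_def i_map_def)
  have prF: "pr j F = \<phi> ! j" if j: "j < r" for j
  proof
    show "pr j F \<subseteq> \<phi> ! j" using j Fi by (auto simp: pr_def)
    show "\<phi> ! j \<subseteq> pr j F"
    proof
      fix v assume v: "v \<in> \<phi> ! j"
      let ?x = "map (\<lambda>i. if i = j then v else sel i) [0..<r]"
      have "?x \<in> F" unfolding F_def by (rule pick) (use v sel in auto)
      moreover have "?x ! j = v" using j by simp
      ultimately show "v \<in> pr j F" unfolding pr_def by (intro image_eqI[where x = ?x]) simp_all
    qed
  qed
  have sub: "F \<subseteq> edge_tuples r V E"
  proof
    fix x assume x: "x \<in> F"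
    then have l: "length x = r" and xj: "\<forall>j<r. x ! j \<in> \<phi> ! j" using Fi by auto
    have "set x \<subseteq> V"
    proof
      fix v assume "v \<in> set x"
      then obtain i where i: "i < r" "v = x ! i" using l by (auto simp: in_set_conv_nth)
      then show "v \<in> V" using xj sV by auto
    qed
    then show "x \<in> edge_tuples r V E" using l ch[OF l xj] by (simp add: edge_tuples_def)
  qed
  have Fne: "F \<noteq> {}"
  proof -
    have "map sel [0..<r] \<in> F" unfolding F_def by (rule pick) (use sel in auto)
    then show ?thesis by auto
  qed
  have fin: "finite F" using finite_subset[OF sub finite_edge_tuples[OF fV]] .
  have disj: "\<forall>j<r. \<forall>k<r. j \<noteq> k \<longrightarrow> pr j F \<inter> pr k F = {}"
  proof (intro allI impI)
    fix j k assume jk: "j < r" "k < r" "j \<noteq> k"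
    show "pr j F \<inter> pr k F = {}"
    proof (rule ccontr)
      assume "pr j F \<inter> pr k F \<noteq> {}"
      then obtain v where v: "v \<in> \<phi> ! j" "v \<in> \<phi> ! k" using prF jk by auto
      let ?x = "map (\<lambda>i. if i = j \<or> i = k then v else sel i) [0..<r]"
      have "?x \<in> F" unfolding F_def by (rule pick) (use v sel in auto)
      then have "length ?x = r \<and> (\<forall>j<r. ?x ! j \<in> \<phi> ! j)" by (rule Fi[THEN iffD1])
      then have "distinct ?x" using ch by blast
      moreover have "?x ! j = v" "?x ! k = v" using jk by auto
      moreover have "length ?x = r" by simp
      ultimately have "?x ! j = ?x ! k \<longleftrightarrow> j = k" using jk by (intro nth_eq_iff_index_eq) simp_all
      then show False using jk \<open>?x ! j = v\<close> \<open>?x ! k = v\<close> by simp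
    qed
  qed
  have edge: "\<forall>x. length x = r \<and> (\<forall>j<r. x ! j \<in> pr j F) \<longrightarrow> set x \<in> E"
  proof (intro allI impI)
    fix x assume x: "length x = r \<and> (\<forall>j<r. x ! j \<in> pr j F)"
    then have "\<forall>j<r. x ! j \<in> \<phi> ! j" using prF by simp
    then show "set x \<in> E" using ch x by blast
  qed
  have FB: "F \<in> B_edge r V E" unfolding B_edge_def using Fne fin sub disj edge by blast
  have "cl r F = F"
  proof (rule set_eqI)
    fix x
    have "(\<forall>j<r. x ! j \<in> pr j F) = (\<forall>j<r. x ! j \<in> \<phi> ! j)" using prF by simp
    then show "x \<in> cl r F \<longleftrightarrow> x \<in> F" by (simp only: Fi cl_def mem_Collect_eq)
  qed
  then show ?thesis unfolding F_def[symmetric] by (intro image_eqI[where x = F] FB) simp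
qed

lemma img_eq: "finite V \<Longrightarrow> cl r ` B_edge r V E = i_map r ` P_KH r V E"
proof
  show "cl r ` B_edge r V E \<subseteq> i_map r ` P_KH r V E" using img_sub by blast
  assume "finite V"
  then show "i_map r ` P_KH r V E \<subseteq> cl r ` B_edge r V E" using img_sup by blast
qed

theorem mainTheorem5:
  fixes r :: nat and V :: "'a set" and E :: "'a set set"
  assumes "finite V"
    and "\<forall>e\<in>E. e \<subseteq> V \<and> card e = r"
  shows "G_collapses (sym_group r) (sd_act r) (sd_B_edge r V E)
           (order_complex (i_map r ` P_KH r V E) (\<subseteq>))"
proof -
  interpret clos_setup "B_edge r V E" "cl r" "sym_group r" "sd_act r"
    by (rule B_setup[OF assms(1)])
  have "G_collapses (sym_group r) (sd_act r) (order_complex (B_edge r V E) (\<subseteq>))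
          (order_complex (cl r ` B_edge r V E) (\<subseteq>))" by (rule collapses_main)
  then show ?thesis by (simp add: sd_B_edge_def img_eq[OF assms(1)])
qed

end
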